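(* Let $(x_n,y_m)$ and $(\tilde x_n,\tilde y_m)$ be two pairs of slightly perturbed increasing arithmetic progressions, $x_n=\alpha n+\beta+o(1)$, $y_m=\gamma m+\delta+o(1)$, $\tilde x_n=\tilde\alpha n+\tilde\beta+o(1)$, $\tilde y_m=\tilde\gamma m+\tilde\delta+o(1)$, with irrational relative densities $\alpha/\gamma$ and $\tilde\alpha/\tilde\gamma$. If the two pairs are topologically equivalent at $+\infty$, then $\alpha/\gamma=\tilde\alpha/\tilde\gamma$, and $\frac{\beta-\delta}{\gamma}-\frac{\tilde\beta-\tilde\delta}{\tilde\gamma}$ lies in the additive subgroup of $\mathbb R$ generated by $1$ and $\alpha/\gamma$.
   Context: A slightly perturbed arithmetic progression is a sequence of the form $x_n=An+\tau+o(1)$, $n\to+\infty$. For a pair $(\alpha n+\beta+o(1),\ \gamma m+\delta+o(1))$ the relative density is $\alpha/\gamma$ and the normalized difference of free terms is $(\beta-\delta)/\gamma$. Two pairs of sequences on the line are topologically equivalent at $+\infty$ if there is a homeomorphism of the line defined in a neighborhood of $+\infty$ mapping the first sequence of the first pair to the first sequence of the second pair and the second to the second. *)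

theory Defs
  imports "HOL-Analysis.Analysis"
begin

definition perturbed_AP :: "(nat \<Rightarrow> real) \<Rightarrow> real \<Rightarrow> real \<Rightarrow> bool" where
  "perturbed_AP x A tau \<longleftrightarrow> (\<lambda>n. x n - (A * real n + tau)) \<longlonglongrightarrow> 0"

definition top_equiv_at_top ::
  "(nat \<Rightarrow> real) \<Rightarrow> (nat \<Rightarrow> real) \<Rightarrow> (nat \<Rightarrow> real) \<Rightarrow> (nat \<Rightarrow> real) \<Rightarrow> bool" where
  "top_equiv_at_top x y x' y' \<longleftrightarrow>
     (\<exists>a b h g. homeomorphism {a<..} {b<..} h g \<and>
        h ` ({a<..} \<inter> range x) = {b<..} \<inter> range x' \<and>
        h ` ({a<..} \<inter> range y) = {b<..} \<inter> range y')"

definition subgroup_gen_1 :: "real \<Rightarrow> real set" where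
  "subgroup_gen_1 \<theta> = {of_int k + of_int l * \<theta> | k l. True}"

end

theory Submission
  imports Defs
begin


lemma cont_inj_mono:
  fixes h :: "real \<Rightarrow> real"
  assumes cont: "continuous_on {a<..} h" and inj: "inj_on h {a<..}"
  shows "(\<forall>u v. a < u \<longrightarrow> u < v \<longrightarrow> h u < h v) \<or> (\<forall>u v. a < u \<longrightarrow> u < v \<longrightarrow> h v < h u)"
proof -
  define S where "S = {z::real\<times>real. a < fst z \<and> fst z < snd z}"
  have S_eq: "S = {z. inner (1::real,0::real) z > a} \<inter> {z. inner (1::real,-1::real) z < 0}"
    unfolding S_def by (auto simp: inner_prod_def)
  have "convex S" unfolding S_eq by (intro convex_Int convex_halfspace_gt convex_halfspace_lt)
  hence conn: "connected S" by (rule convex_connected)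
  define f where "f z = h (snd z) - h (fst z)" for z :: "real \<times> real"
  have c1: "continuous_on S (\<lambda>z. h (snd z))"
    by (rule continuous_on_compose2[OF cont continuous_on_snd]) (auto simp: S_def)
  have c2: "continuous_on S (\<lambda>z. h (fst z))"
    by (rule continuous_on_compose2[OF cont continuous_on_fst]) (auto simp: S_def)
  have "continuous_on S f" unfolding f_def by (intro continuous_on_diff c1 c2)
  hence cf: "connected (f ` S)" using conn by (rule connected_continuous_image)
  have nz: "0 \<notin> f ` S"
  proof
    assume "0 \<in> f ` S"
    then obtain z where z: "z \<in> S" "f z = 0" by auto
    hence "h (snd z) = h (fst z)" "a < fst z" "fst z < snd z" by (auto simp: f_def S_def)
    thus False using inj by (metis greaterThan_iff inj_onD less_trans order_less_irrefl)
  qed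
  show ?thesis
  proof (rule ccontr)
    assume "\<not> ?thesis"
    then obtain u v u' v' where uv: "a < u" "u < v" "\<not> h u < h v" and uv': "a < u'" "u' < v'" "\<not> h v' < h u'"
      by blast
    have p1: "(u,v) \<in> S" "(u',v') \<in> S" using uv uv' by (auto simp: S_def)
    have "f (u,v) \<le> 0" "f (u',v') \<ge> 0" using uv uv' by (auto simp: f_def)
    hence "0 \<in> f ` S" using cf p1 unfolding connected_iff_interval
      by (meson imageI)
    with nz show False by simp
  qed
qed

lemma dense_irr:
  fixes \<theta> w r :: real
  assumes "\<theta> \<notin> \<rat>" "\<theta> > 0" "r > 0"
  shows "\<exists>n m::nat. n \<ge> M \<and> m \<ge> M \<and> \<bar>\<theta> * real n - real m - w\<bar> < r"
proof -
  obtain M0 :: nat where M0: "real M0 > (real M + \<bar>w\<bar> + 1) / \<theta>"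
    using reals_Archimedean2 by blast
  define M' where "M' = max M M0"
  have "real M0 \<le> real M'" by (simp add: M'_def)
  hence "\<theta> * real M0 \<le> \<theta> * real M'" using assms(2) by (simp add: mult_left_mono)
  moreover have "\<theta> * real M0 > real M + \<bar>w\<bar> + 1"
    using M0 assms(2) by (simp add: field_simps)
  ultimately have M'2: "\<theta> * real M' > real M + \<bar>w\<bar> + 1" by linarith
  have "M' \<ge> M" by (simp add: M'_def)
  have mr: "min r 1 > 0" using assms(3) by simp
  obtain h k :: int where hk: "k > 0" "\<bar>of_int k * \<theta> - of_int h - (w - real M' * \<theta>)\<bar> < min r 1"
    using sequence_of_fractional_parts_is_dense[OF assms(1) mr, of "w - real M' * \<theta>"] by blast
  define n where "n = nat k + M'"
  have rn: "real n = of_int k + real M'" using hk(1) by (simp add: n_def)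
  have e: "\<bar>\<theta> * real n - of_int h - w\<bar> < min r 1" using hk(2) rn by (simp add: algebra_simps)
  have kpos: "\<theta> * of_int k > 0" using hk(1) assms(2) by simp
  have "of_int h > real M" using e M'2 kpos rn by (simp add: algebra_simps abs_less_iff) linarith
  hence hM: "h \<ge> int M" by linarith
  define m where "m = nat h"
  have rm: "real m = of_int h" using hM by (simp add: m_def)
  show ?thesis
    by (rule exI[of _ n], rule exI[of _ m]) (use e rm hM \<open>M' \<ge> M\<close> in \<open>auto simp: n_def m_def\<close>)
qed



lemma ap_err:
  assumes "perturbed_AP x \<alpha> \<beta>" "\<epsilon> > 0"
  shows "\<exists>N. \<forall>n\<ge>N. \<bar>x n - (\<alpha> * real n + \<beta>)\<bar> < \<epsilon>"
  using assms unfolding perturbed_AP_def LIMSEQ_iff by simp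

lemma ap_top:
  assumes "perturbed_AP x \<alpha> \<beta>" "\<alpha> > 0"
  shows "\<exists>N. \<forall>n\<ge>N. x n > C"
proof -
  obtain N1 where N1: "\<forall>n\<ge>N1. \<bar>x n - (\<alpha> * real n + \<beta>)\<bar> < 1" using ap_err[OF assms(1)] by force
  obtain N2 :: nat where N2: "real N2 > (C - \<beta> + 1) / \<alpha>" using reals_Archimedean2 by blast
  have "\<forall>n\<ge>max N1 N2. x n > C"
  proof (intro allI impI)
    fix n assume n: "n \<ge> max N1 N2"
    have "real n \<ge> real N2" using n by simp
    hence "\<alpha> * real n \<ge> \<alpha> * real N2" using assms(2) by (simp add: mult_left_mono)
    moreover have "\<alpha> * real N2 > C - \<beta> + 1" using N2 assms(2) by (simp add: field_simps)
    moreover have "\<bar>x n - (\<alpha> * real n + \<beta>)\<bar> < 1" using N1 n by simp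
    ultimately show "x n > C" by linarith
  qed
  thus ?thesis by blast
qed

lemma ap_fin:
  assumes "perturbed_AP x \<alpha> \<beta>" "\<alpha> > 0"
  shows "finite {k. x k < C}"
proof -
  obtain N where N: "\<forall>n\<ge>N. x n > C" using ap_top[OF assms] by blast
  have "{k. x k < C} \<subseteq> {..<N}"
  proof
    fix k assume "k \<in> {k. x k < C}"
    hence "x k < C" by simp
    thus "k \<in> {..<N}" using N by (meson lessThan_iff not_le order.asym)
  qed
  thus ?thesis using finite_subset by blast
qed

lemma finite_bound:
  fixes x :: "nat \<Rightarrow> real"
  shows "\<exists>C. \<forall>k<K. x k \<le> C"
proof -
  have "\<forall>k<K. x k \<le> (\<Sum>j<K. \<bar>x j\<bar>)"
  proof (intro allI impI)
    fix k assume "k < K"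
    hence "\<bar>x k\<bar> \<le> (\<Sum>j<K. \<bar>x j\<bar>)"
      by (intro member_le_sum) auto
    thus "x k \<le> (\<Sum>j<K. \<bar>x j\<bar>)" by linarith
  qed
  thus ?thesis by blast
qed

lemma ap_gap:
  assumes "perturbed_AP x \<alpha> \<beta>" "\<alpha> > 0"
  shows "\<exists>N. \<forall>n\<ge>N. x n < x (Suc n) \<and> (\<forall>k. \<not> (x n < x k \<and> x k < x (Suc n)))"
proof -
  have a4: "\<alpha>/4 > 0" using assms(2) by simp
  obtain K where K: "\<forall>n\<ge>K. \<bar>x n - (\<alpha> * real n + \<beta>)\<bar> < \<alpha>/4"
    using ap_err[OF assms(1) a4] by blast
  have K': "x n < \<alpha> * real n + \<beta> + \<alpha>/4 \<and> x n > \<alpha> * real n + \<beta> - \<alpha>/4" if "n \<ge> K" for n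
  proof -
    have "\<bar>x n - (\<alpha> * real n + \<beta>)\<bar> < \<alpha>/4" using K that by blast
    thus ?thesis by (simp only: abs_less_iff) linarith
  qed
  obtain C where C: "\<forall>k<K. x k \<le> C" using finite_bound by blast
  obtain N1 where N1: "\<forall>n\<ge>N1. x n > C" using ap_top[OF assms] by blast
  have "\<forall>n\<ge>max K N1. x n < x (Suc n) \<and> (\<forall>k. \<not> (x n < x k \<and> x k < x (Suc n)))"
  proof (intro allI impI)
    fix n assume n: "n \<ge> max K N1"
    have nK: "n \<ge> K" "Suc n \<ge> K" "n \<ge> N1" using n by auto
    note e1 = K'[OF nK(1)] and e2 = K'[OF nK(2)]
    have s: "\<alpha> * real (Suc n) = \<alpha> * real n + \<alpha>" by (simp add: algebra_simps)
    have g1: "x n < x (Suc n)" using e1 e2 s assms(2) by linarith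
    have "\<forall>k. \<not> (x n < x k \<and> x k < x (Suc n))"
    proof (intro allI notI)
      fix k assume k: "x n < x k \<and> x k < x (Suc n)"
      have xC: "x n > C" using N1 nK(3) by blast
      have "k \<ge> K"
      proof (rule ccontr)
        assume "\<not> K \<le> k"
        hence "x k \<le> C" using C by simp
        thus False using xC k by linarith
      qed
      note e3 = K'[OF this]
      have "\<alpha> * real k < \<alpha> * (real n + 3/2)" using e2 e3 k s by (simp only: distrib_left) linarith
      hence "real k < real n + 3/2" using assms(2) by simp
      hence k1: "k \<le> Suc n" by linarith
      have "\<alpha> * real k > \<alpha> * (real n - 1/2)" using e1 e3 k by (simp only: right_diff_distrib) linarith
      hence "real k > real n - 1/2" using assms(2) by simp
      hence k2: "k \<ge> n" by linarith
      from k1 k2 have "k = n \<or> k = Suc n" by linarith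
      thus False using k by auto
    qed
    with g1 show "x n < x (Suc n) \<and> (\<forall>k. \<not> (x n < x k \<and> x k < x (Suc n)))" by blast
  qed
  thus ?thesis by blast
qed

lemma shift:
  fixes h :: "real \<Rightarrow> real"
  assumes x: "perturbed_AP x \<alpha> \<beta>" "\<alpha> > 0"
    and x': "perturbed_AP x' \<alpha>' \<beta>'" "\<alpha>' > 0"
    and mono: "\<forall>u v. a < u \<longrightarrow> u < v \<longrightarrow> h u < h v"
    and big: "\<forall>C. \<exists>s>a. \<forall>t>s. h t > C"
    and img: "h ` ({a<..} \<inter> range x) = {b<..} \<inter> range x'"
  shows "\<exists>i j. \<forall>t. h (x (i + t)) = x' (j + t)"
proof -
  obtain N where N: "\<forall>n\<ge>N. x n < x (Suc n) \<and> (\<forall>k. \<not> (x n < x k \<and> x k < x (Suc n)))"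
    using ap_gap[OF x] by blast
  obtain N' where N': "\<forall>n\<ge>N'. x' n < x' (Suc n) \<and> (\<forall>k. \<not> (x' n < x' k \<and> x' k < x' (Suc n)))"
    using ap_gap[OF x'] by blast
  obtain C' where C': "\<forall>k<N'. x' k \<le> C'" using finite_bound by blast
  obtain s where s: "s > a" "\<forall>t>s. h t > C'" using big by blast
  obtain N2 where N2: "\<forall>n\<ge>N2. x n > s" using ap_top[OF x] by blast
  define i where "i = max N N2"
  have xa: "x n > a" "x n > s" if "n \<ge> i" for n using N2 that s(1) by (auto simp: i_def)
  have hin: "h (x n) \<in> {b<..} \<inter> range x'" if "n \<ge> i" for n
    using img xa[OF that] by blast
  obtain j where j: "h (x i) = x' j" using hin[of i] by auto
  have "x' j > C'" using j s xa[of i] by auto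
  hence jN: "j \<ge> N'" using C' by (meson leI not_le)
  have "h (x (i + t)) = x' (j + t)" for t
  proof (induction t)
    case 0 thus ?case using j by simp
  next
    case (Suc t)
    define n where "n = i + t"
    define k where "k = j + t"
    have IH: "h (x n) = x' k" using Suc by (simp add: n_def k_def)
    have nN: "n \<ge> N" "n \<ge> i" by (auto simp: n_def i_def)
    have kN: "k \<ge> N'" using jN by (simp add: k_def)
    obtain k2 where k2: "h (x (Suc n)) = x' k2" using hin[of "Suc n"] nN by auto
    have gapn: "x n < x (Suc n)" "\<forall>m. \<not> (x n < x m \<and> x m < x (Suc n))" using N nN by auto
    have gapk: "x' k < x' (Suc k)" "\<forall>m. \<not> (x' k < x' m \<and> x' m < x' (Suc k))" using N' kN by auto
    have "h (x n) < h (x (Suc n))" using mono gapn(1) xa[of n] nN(2) by blast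
    hence lt: "x' k < x' k2" using IH k2 by simp
    have xkb: "x' k > b" using hin[of n] nN IH by auto
    have "x' k2 = x' (Suc k)"
    proof (rule ccontr)
      assume ne: "x' k2 \<noteq> x' (Suc k)"
      show False
      proof (cases "x' k2 < x' (Suc k)")
        case True thus False using gapk lt by blast
      next
        case False
        hence gt: "x' (Suc k) < x' k2" using ne by linarith
        have "x' (Suc k) \<in> {b<..} \<inter> range x'" using xkb gapk(1) by auto
        hence "x' (Suc k) \<in> h ` ({a<..} \<inter> range x)" using img by simp
        then obtain u where u: "u \<in> {a<..} \<inter> range x" "x' (Suc k) = h u" by blast
        then obtain m where m: "x m > a" "h (x m) = x' (Suc k)" by auto
        have "x n < x m"
        proof (rule ccontr)
          assume "\<not> x n < x m"
          hence "x m < x n \<or> x m = x n" by linarith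
          moreover have "x m < x n \<Longrightarrow> h (x m) < h (x n)" using mono m(1) by blast
          ultimately have "h (x m) \<le> h (x n)" by force
          thus False using m(2) IH gapk(1) by linarith
        qed
        moreover have "x m < x (Suc n)"
        proof (rule ccontr)
          assume "\<not> x m < x (Suc n)"
          hence "x (Suc n) < x m \<or> x m = x (Suc n)" by linarith
          moreover have "x (Suc n) > a" using xa[of "Suc n"] nN by simp
          moreover have "x (Suc n) < x m \<Longrightarrow> h (x (Suc n)) < h (x m)" using mono calculation(2) by blast
          ultimately have "h (x (Suc n)) \<le> h (x m)" by force
          thus False using m(2) k2 gt by linarith
        qed
        ultimately show False using gapn(2) by blast
      qed
    qed
    thus ?case using k2 by (simp add: n_def k_def)
  qed
  thus ?thesis by blast
qed



lemma core:
  fixes P P' :: "nat \<Rightarrow> nat \<Rightarrow> real" and \<theta> \<theta>' c1 c2 :: real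
  assumes irr: "\<theta> \<notin> \<rat>" and tpos: "\<theta> > 0"
    and E1: "\<forall>\<eta>>0. \<exists>N. \<forall>n\<ge>N. \<forall>m\<ge>N. \<bar>P n m - (\<theta> * real n - real m + c1)\<bar> < \<eta>"
    and E2: "\<forall>\<eta>>0. \<exists>N. \<forall>n\<ge>N. \<forall>m\<ge>N. \<bar>P' n m - (\<theta>' * real n - real m + c2)\<bar> < \<eta>"
    and H: "\<forall>n\<ge>N1. \<forall>m\<ge>N1. (P n m < 0 \<longrightarrow> P' n m < 0) \<and> (P n m > 0 \<longrightarrow> P' n m > 0)"
  shows "\<theta>' = \<theta> \<and> c2 = c1"
proof (rule ccontr)
  assume neg: "\<not> (\<theta>' = \<theta> \<and> c2 = c1)"
  have contra: False if "n \<ge> N1" "m \<ge> N1" "(P n m < 0 \<and> P' n m \<ge> 0) \<or> (P n m > 0 \<and> P' n m \<le> 0)" for n m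
    using H that by force
  have errs: "\<exists>N. \<forall>n\<ge>N. \<forall>m\<ge>N. \<bar>P n m - (\<theta> * real n - real m + c1)\<bar> < \<eta> \<and>
                 \<bar>P' n m - (\<theta>' * real n - real m + c2)\<bar> < \<eta>" if eta: "\<eta> > 0" for \<eta>
  proof -
    obtain Na where Na: "\<forall>n\<ge>Na. \<forall>m\<ge>Na. \<bar>P n m - (\<theta> * real n - real m + c1)\<bar> < \<eta>" using E1 eta by blast
    obtain Nb where Nb: "\<forall>n\<ge>Nb. \<forall>m\<ge>Nb. \<bar>P' n m - (\<theta>' * real n - real m + c2)\<bar> < \<eta>" using E2 eta by blast
    show ?thesis by (rule exI[of _ "max Na Nb"]) (use Na Nb in auto)
  qed
  show False
  proof (cases "\<theta>' = \<theta>")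
    case True
    hence cne: "c2 \<noteq> c1" using neg by simp
    define d where "d = \<bar>c2 - c1\<bar>"
    have dpos: "d > 0" using cne by (simp add: d_def)
    obtain N2 where N2: "\<forall>n\<ge>N2. \<forall>m\<ge>N2. \<bar>P n m - (\<theta> * real n - real m + c1)\<bar> < d/8 \<and>
                 \<bar>P' n m - (\<theta>' * real n - real m + c2)\<bar> < d/8" using errs[of "d/8"] dpos by auto
    define w where "w = (if c2 > c1 then - c1 - d/2 else - c1 + d/2)"
    obtain n m where nm: "n \<ge> max N1 N2" "m \<ge> max N1 N2" "\<bar>\<theta> * real n - real m - w\<bar> < d/8"
      using dense_irr[OF irr tpos, of "d/8" "max N1 N2" w] dpos by auto
    have e: "\<bar>P n m - (\<theta> * real n - real m + c1)\<bar> < d/8"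
            "\<bar>P' n m - (\<theta> * real n - real m + c2)\<bar> < d/8" using N2 nm True by auto
    show False
    proof (cases "c2 > c1")
      case True
      hence "d = c2 - c1" "w = - c1 - d/2" by (auto simp: d_def w_def)
      hence "P n m < 0 \<and> P' n m \<ge> 0" using e nm(3) by (simp only: abs_less_iff, elim conjE, (intro conjI; linarith))
      thus False using contra nm by auto
    next
      case False
      hence "d = c1 - c2" "w = - c1 + d/2" using cne by (auto simp: d_def w_def)
      hence "P n m > 0 \<and> P' n m \<le> 0" using e nm(3) by (simp only: abs_less_iff, elim conjE, (intro conjI; linarith))
      thus False using contra nm by auto
    qed
  next
    case False
    define \<Delta> where "\<Delta> = \<bar>\<theta>' - \<theta>\<bar>"
    have Dpos: "\<Delta> > 0" using False by (simp add: \<Delta>_def)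
    obtain N2 where N2: "\<forall>n\<ge>N2. \<forall>m\<ge>N2. \<bar>P n m - (\<theta> * real n - real m + c1)\<bar> < 1/8 \<and>
                 \<bar>P' n m - (\<theta>' * real n - real m + c2)\<bar> < 1/8" using errs[of "1/8"] by auto
    obtain N4 :: nat where N4: "real N4 > (2 + \<bar>c1\<bar> + \<bar>c2\<bar>) / \<Delta>" using reals_Archimedean2 by blast
    define M where "M = max N1 (max N2 N4)"
    define w where "w = (if \<theta>' > \<theta> then - c1 - 1/2 else - c1 + 1/2)"
    obtain n m where nm: "n \<ge> M" "m \<ge> M" "\<bar>\<theta> * real n - real m - w\<bar> < 1/8"
      using dense_irr[OF irr tpos, of "1/8" M w] by auto
    have e: "\<bar>P n m - (\<theta> * real n - real m + c1)\<bar> < 1/8"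
            "\<bar>P' n m - (\<theta>' * real n - real m + c2)\<bar> < 1/8" using N2 nm by (auto simp: M_def)
    have "real n \<ge> real N4" using nm(1) by (simp add: M_def)
    hence "\<Delta> * real n \<ge> \<Delta> * real N4" using Dpos by (simp add: mult_left_mono)
    moreover have "\<Delta> * real N4 > 2 + \<bar>c1\<bar> + \<bar>c2\<bar>" using N4 Dpos by (simp add: field_simps)
    ultimately have big: "\<Delta> * real n > 2 + \<bar>c1\<bar> + \<bar>c2\<bar>" by linarith
    have nN1: "n \<ge> N1" "m \<ge> N1" using nm by (auto simp: M_def)
    show False
    proof (cases "\<theta>' > \<theta>")
      case True
      hence "\<Delta> * real n = \<theta>' * real n - \<theta> * real n" "w = - c1 - 1/2"
        by (auto simp: \<Delta>_def w_def left_diff_distrib)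
      hence "P n m < 0 \<and> P' n m \<ge> 0" using e nm(3) big by (simp only: abs_less_iff, elim conjE, (intro conjI; linarith))
      thus False using contra nN1 by auto
    next
      case False
      hence "\<Delta> * real n = \<theta> * real n - \<theta>' * real n" "w = - c1 + 1/2"
        using \<open>\<theta>' \<noteq> \<theta>\<close> by (auto simp: \<Delta>_def w_def left_diff_distrib)
      hence "P n m > 0 \<and> P' n m \<le> 0" using e nm(3) big by (simp only: abs_less_iff, elim conjE, (intro conjI; linarith))
      thus False using contra nN1 by auto
    qed
  qed
qed

lemma E_lemma:
  assumes x: "perturbed_AP x \<alpha> \<beta>" and y: "perturbed_AP y \<gamma> \<delta>" and g: "\<gamma> > 0"
  shows "\<forall>\<eta>>0. \<exists>N. \<forall>n\<ge>N. \<forall>m\<ge>N. \<bar>(x (i+n) - y (k+m)) / \<gamma> -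
           (\<alpha>/\<gamma> * real n - real m + (\<alpha> * real i + \<beta> - \<gamma> * real k - \<delta>) / \<gamma>)\<bar> < \<eta>"
proof (intro allI impI)
  fix \<eta> :: real assume eta: "\<eta> > 0"
  have ep: "\<eta> * \<gamma> / 2 > 0" using eta g by simp
  obtain Nx where Nx: "\<forall>n\<ge>Nx. \<bar>x n - (\<alpha> * real n + \<beta>)\<bar> < \<eta> * \<gamma> / 2" using ap_err[OF x ep] by blast
  obtain Ny where Ny: "\<forall>n\<ge>Ny. \<bar>y n - (\<gamma> * real n + \<delta>)\<bar> < \<eta> * \<gamma> / 2" using ap_err[OF y ep] by blast
  have "\<forall>n\<ge>max Nx Ny. \<forall>m\<ge>max Nx Ny. \<bar>(x (i+n) - y (k+m)) / \<gamma> -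
           (\<alpha>/\<gamma> * real n - real m + (\<alpha> * real i + \<beta> - \<gamma> * real k - \<delta>) / \<gamma>)\<bar> < \<eta>"
  proof (intro allI impI)
    fix n m assume n: "n \<ge> max Nx Ny" and m: "m \<ge> max Nx Ny"
    define ex where "ex = x (i+n) - (\<alpha> * real (i+n) + \<beta>)"
    define ey where "ey = y (k+m) - (\<gamma> * real (k+m) + \<delta>)"
    have "i + n \<ge> Nx" "k + m \<ge> Ny" using n m by auto
    hence bx: "\<bar>ex\<bar> < \<eta> * \<gamma> / 2" and by': "\<bar>ey\<bar> < \<eta> * \<gamma> / 2"
      using Nx Ny unfolding ex_def ey_def by blast+
    have eq: "(x (i+n) - y (k+m)) / \<gamma> -
           (\<alpha>/\<gamma> * real n - real m + (\<alpha> * real i + \<beta> - \<gamma> * real k - \<delta>) / \<gamma>) = (ex - ey) / \<gamma>"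
      using g by (simp add: ex_def ey_def field_simps)
    have "\<bar>ex - ey\<bar> < \<eta> * \<gamma>" using bx by' by linarith
    hence "\<bar>ex - ey\<bar> / \<gamma> < \<eta>" using g by (simp add: field_simps)
    thus "\<bar>(x (i+n) - y (k+m)) / \<gamma> -
           (\<alpha>/\<gamma> * real n - real m + (\<alpha> * real i + \<beta> - \<gamma> * real k - \<delta>) / \<gamma>)\<bar> < \<eta>"
      using eq g by simp
  qed
  thus "\<exists>N. \<forall>n\<ge>N. \<forall>m\<ge>N. \<bar>(x (i+n) - y (k+m)) / \<gamma> -
           (\<alpha>/\<gamma> * real n - real m + (\<alpha> * real i + \<beta> - \<gamma> * real k - \<delta>) / \<gamma>)\<bar> < \<eta>" by blast
qed



theorem lemma7:
  fixes x y x' y' :: "nat \<Rightarrow> real"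
    and \<alpha> \<beta> \<gamma> \<delta> \<alpha>' \<beta>' \<gamma>' \<delta>' :: real
  assumes "\<alpha> > 0" "\<gamma> > 0" "\<alpha>' > 0" "\<gamma>' > 0"
    and "perturbed_AP x \<alpha> \<beta>" "perturbed_AP y \<gamma> \<delta>"
    and "perturbed_AP x' \<alpha>' \<beta>'" "perturbed_AP y' \<gamma>' \<delta>'"
    and "\<alpha> / \<gamma> \<notin> \<rat>" "\<alpha>' / \<gamma>' \<notin> \<rat>"
    and "top_equiv_at_top x y x' y'"
  shows "\<alpha> / \<gamma> = \<alpha>' / \<gamma>' \<and>
         (\<beta> - \<delta>) / \<gamma> - (\<beta>' - \<delta>') / \<gamma>' \<in> subgroup_gen_1 (\<alpha> / \<gamma>)"
proof -
  note ax = assms(5) assms(1) and ay = assms(6) assms(2)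
  note ax' = assms(7) assms(3) and ay' = assms(8) assms(4)
  obtain a b h g where all: "homeomorphism {a<..} {b<..} h g \<and>
        h ` ({a<..} \<inter> range x) = {b<..} \<inter> range x' \<and>
        h ` ({a<..} \<inter> range y) = {b<..} \<inter> range y'"
    using assms(11) unfolding top_equiv_at_top_def by (elim exE) (erule that)
  have hom: "homeomorphism {a<..} {b<..} h g" using conjunct1[OF all] .
  have imx: "h ` ({a<..} \<inter> range x) = {b<..} \<inter> range x'" using conjunct1[OF conjunct2[OF all]] .
  have imy: "h ` ({a<..} \<inter> range y) = {b<..} \<inter> range y'" using conjunct2[OF conjunct2[OF all]] .
  note hd = hom[unfolded homeomorphism_def]
  have hinv: "\<forall>t\<in>{a<..}. g (h t) = t" using conjunct1[OF hd] .
  have himg: "h ` {a<..} = {b<..}" using conjunct1[OF conjunct2[OF hd]] .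
  have cont: "continuous_on {a<..} h" using conjunct1[OF conjunct2[OF conjunct2[OF hd]]] .
  have inj: "inj_on h {a<..}" by (rule inj_on_inverseI[where g = g]) (use hinv in blast)
  have notdec: "\<not> (\<forall>u v. a < u \<longrightarrow> u < v \<longrightarrow> h v < h u)"
  proof
    assume dec: "\<forall>u v. a < u \<longrightarrow> u < v \<longrightarrow> h v < h u"
    define C where "C = h (a + 1)"
    define S where "S = {a+1<..} \<inter> range x"
    have sub: "h ` S \<subseteq> x' ` {k. x' k < C}"
    proof
      fix z assume "z \<in> h ` S"
      then obtain t where t: "t \<in> S" "z = h t" by blast
      have ta: "t > a + 1" "t \<in> {a<..} \<inter> range x" using t(1) unfolding S_def by auto
      have "h t < C" using dec[rule_format, of "a+1" t] ta(1) unfolding C_def by simp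
      moreover have "h t \<in> {b<..} \<inter> range x'" using imx ta(2) by blast
      ultimately show "z \<in> x' ` {k. x' k < C}" using t(2) by auto
    qed
    have "finite (x' ` {k. x' k < C})" using ap_fin[OF ax'] by blast
    hence "finite (h ` S)" using sub finite_subset by blast
    moreover have "inj_on h S" using inj by (rule inj_on_subset) (auto simp: S_def)
    ultimately have finS: "finite S" using finite_imageD by blast
    define M where "M = Max (insert (a+1) S)"
    obtain n where n: "x n > M" using ap_top[OF ax, of M] by blast
    have "M \<ge> a + 1" unfolding M_def using finS by simp
    hence "x n \<in> S" using n by (auto simp: S_def)
    hence "x n \<le> M" unfolding M_def using finS by simp
    thus False using n by simp
  qed
  have inc: "\<forall>u v. a < u \<longrightarrow> u < v \<longrightarrow> h u < h v"
    using cont_inj_mono[OF cont inj] notdec by blast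
  have big: "\<forall>C. \<exists>s>a. \<forall>t>s. h t > C"
  proof
    fix C
    have "max C b + 1 \<in> h ` {a<..}" using himg by simp
    then obtain s where s: "s > a" "h s = max C b + 1" by auto
    have "\<forall>t>s. h t > C"
    proof (intro allI impI)
      fix t assume "t > s"
      hence "h s < h t" using inc s(1) by blast
      thus "h t > C" using s(2) by linarith
    qed
    thus "\<exists>s>a. \<forall>t>s. h t > C" using s(1) by blast
  qed
  obtain i j where ij: "\<forall>t. h (x (i + t)) = x' (j + t)"
    using shift[OF ax ax' inc big imx] by blast
  obtain k l where kl: "\<forall>t. h (y (k + t)) = y' (l + t)"
    using shift[OF ay ay' inc big imy] by blast
  obtain Na where Na: "\<forall>n\<ge>Na. x n > a" using ap_top[OF ax] by blast
  obtain Nb where Nb: "\<forall>n\<ge>Nb. y n > a" using ap_top[OF ay] by blast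
  define N1 where "N1 = max Na Nb"
  define \<theta> where "\<theta> = \<alpha> / \<gamma>"
  define \<theta>' where "\<theta>' = \<alpha>' / \<gamma>'"
  define c1 where "c1 = (\<alpha> * real i + \<beta> - \<gamma> * real k - \<delta>) / \<gamma>"
  define c2 where "c2 = (\<alpha>' * real j + \<beta>' - \<gamma>' * real l - \<delta>') / \<gamma>'"
  define P where "P n m = (x (i+n) - y (k+m)) / \<gamma>" for n m
  define P' where "P' n m = (x' (j+n) - y' (l+m)) / \<gamma>'" for n m
  have E1: "\<forall>\<eta>>0. \<exists>N. \<forall>n\<ge>N. \<forall>m\<ge>N. \<bar>P n m - (\<theta> * real n - real m + c1)\<bar> < \<eta>"
    unfolding P_def \<theta>_def c1_def by (rule E_lemma[OF assms(5) assms(6) assms(2)])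
  have E2: "\<forall>\<eta>>0. \<exists>N. \<forall>n\<ge>N. \<forall>m\<ge>N. \<bar>P' n m - (\<theta>' * real n - real m + c2)\<bar> < \<eta>"
    unfolding P'_def \<theta>'_def c2_def by (rule E_lemma[OF assms(7) assms(8) assms(4)])
  have H: "\<forall>n\<ge>N1. \<forall>m\<ge>N1. (P n m < 0 \<longrightarrow> P' n m < 0) \<and> (P n m > 0 \<longrightarrow> P' n m > 0)"
  proof (intro allI impI)
    fix n m assume n: "n \<ge> N1" and m: "m \<ge> N1"
    have xa: "x (i+n) > a" using Na n by (simp add: N1_def)
    have ya: "y (k+m) > a" using Nb m by (simp add: N1_def)
    have "(P n m < 0) = (x (i+n) < y (k+m))" using assms(2) by (simp add: P_def divide_less_0_iff)
    moreover have "(P' n m < 0) = (x' (j+n) < y' (l+m))" using assms(4) by (simp add: P'_def divide_less_0_iff)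
    moreover have "(P n m > 0) = (x (i+n) > y (k+m))" using assms(2) by (simp add: P_def zero_less_divide_iff)
    moreover have "(P' n m > 0) = (x' (j+n) > y' (l+m))" using assms(4) by (simp add: P'_def zero_less_divide_iff)
    moreover have hx: "h (x (i+n)) = x' (j+n)" using ij by blast
    moreover have hy: "h (y (k+m)) = y' (l+m)" using kl by blast
    moreover have "x (i+n) < y (k+m) \<Longrightarrow> h (x (i+n)) < h (y (k+m))"
      using inc xa by blast
    moreover have "y (k+m) < x (i+n) \<Longrightarrow> h (y (k+m)) < h (x (i+n))"
      using inc ya by blast
    ultimately show "(P n m < 0 \<longrightarrow> P' n m < 0) \<and> (P n m > 0 \<longrightarrow> P' n m > 0)" by simp
  qed
  have tpos: "\<theta> > 0" using assms(1,2) by (simp add: \<theta>_def)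
  have eq: "\<theta>' = \<theta> \<and> c2 = c1"
    using core[OF assms(9)[folded \<theta>_def] tpos E1 E2 H] .
  have s1: "(\<beta> - \<delta>) / \<gamma> = c1 - \<theta> * real i + real k"
    using assms(2) by (simp add: c1_def \<theta>_def field_simps)
  have s2: "(\<beta>' - \<delta>') / \<gamma>' = c2 - \<theta>' * real j + real l"
    using assms(4) by (simp add: c2_def \<theta>'_def field_simps)
  have "(\<beta> - \<delta>) / \<gamma> - (\<beta>' - \<delta>') / \<gamma>' = of_int (int k - int l) + of_int (int j - int i) * \<theta>"
    using s1 s2 eq by (simp add: algebra_simps)
  hence "(\<beta> - \<delta>) / \<gamma> - (\<beta>' - \<delta>') / \<gamma>' \<in> subgroup_gen_1 \<theta>"
    unfolding subgroup_gen_1_def by blast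
  thus ?thesis using eq by (simp add: \<theta>_def \<theta>'_def)
qed

end
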